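(* Every real algebraic number of degree $2$ is the limit value $\lim_{\lambda\to0}v_\lambda$ of some $2\times2$ absorbing game whose data $g,q,w$ are all rational. *)

theory Defs
  imports "HOL-Analysis.Analysis" "HOL-Computational_Algebra.Computational_Algebra"
begin

definition mixed :: "('a::finite \<Rightarrow> real) set" where
  "mixed = {x. (\<forall>i. 0 \<le> x i) \<and> sum x UNIV = 1}"

definition payoff :: "('i::finite \<Rightarrow> 'j::finite \<Rightarrow> real) \<Rightarrow> ('i \<Rightarrow> real) \<Rightarrow> ('j \<Rightarrow> real) \<Rightarrow> real" where
  "payoff A x y = (\<Sum>i\<in>UNIV. \<Sum>j\<in>UNIV. x i * y j * A i j)"

text \<open>Value of the matrix game A (maxmin in mixed strategies; equals the minmax by von Neumann).\<close>
definition val :: "('i::finite \<Rightarrow> 'j::finite \<Rightarrow> real) \<Rightarrow> real" where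
  "val A = (SUP x\<in>mixed. INF y\<in>mixed. payoff A x y)"

text \<open>Shapley operator of the absorbing game (g, q, w): stage payoff g, absorption
  probability q, absorbing payoff w, discount factor lam.\<close>
definition shapley_op :: "('i::finite \<Rightarrow> 'j::finite \<Rightarrow> real) \<Rightarrow> ('i \<Rightarrow> 'j \<Rightarrow> real) \<Rightarrow>
    ('i \<Rightarrow> 'j \<Rightarrow> real) \<Rightarrow> real \<Rightarrow> real \<Rightarrow> real" where
  "shapley_op g q w lam v =
     val (\<lambda>i j. lam * g i j + (1 - lam) * (q i j * w i j + (1 - q i j) * v))"

definition disc_value :: "('i::finite \<Rightarrow> 'j::finite \<Rightarrow> real) \<Rightarrow> ('i \<Rightarrow> 'j \<Rightarrow> real) \<Rightarrow>
    ('i \<Rightarrow> 'j \<Rightarrow> real) \<Rightarrow> real \<Rightarrow> real" where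
  "disc_value g q w lam = (THE v. v = shapley_op g q w lam v)"

definition algebraic_deg2 :: "real \<Rightarrow> bool" where
  "algebraic_deg2 z \<longleftrightarrow> (\<exists>p :: rat poly. irreducible p \<and> degree p = 2 \<and>
      poly (map_poly of_rat p) z = 0)"

end

theory Submission
  imports Defs
begin

lemma mixed_bool: "(x::bool\<Rightarrow>real) \<in> mixed \<longleftrightarrow> 0 \<le> x True \<and> 0 \<le> x False \<and> x True + x False = 1"
proof -
  have "(\<forall>i. 0 \<le> x i) \<longleftrightarrow> 0 \<le> x True \<and> 0 \<le> x False"
    by (simp add: all_bool_eq)
  moreover have "sum x UNIV = x True + x False" by (simp add: UNIV_bool)
  ultimately show ?thesis unfolding mixed_def by auto
qed

lemma payoff_bool: "payoff (A::bool\<Rightarrow>bool\<Rightarrow>real) x y =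
   x True * y True * A True True + x True * y False * A True False
 + x False * y True * A False True + x False * y False * A False False"
  by (simp add: payoff_def UNIV_bool)

lemma mixed_ne: "(mixed :: (bool\<Rightarrow>real) set) \<noteq> {}"
proof -
  have "(\<lambda>b. if b then 1 else 0 :: real) \<in> mixed" by (simp add: mixed_bool)
  then show ?thesis by blast
qed

lemma payoff_bounds:
  fixes A :: "bool\<Rightarrow>bool\<Rightarrow>real"
  defines "R \<equiv> \<bar>A True True\<bar> + \<bar>A True False\<bar> + \<bar>A False True\<bar> + \<bar>A False False\<bar>"
  assumes "x \<in> mixed" "y \<in> mixed"
  shows "- R \<le> payoff A x y" "payoff A x y \<le> R"
proof -
  have x: "0 \<le> x True" "0 \<le> x False" "x True + x False = 1" and
       y: "0 \<le> y True" "0 \<le> y False" "y True + y False = 1"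
    using assms(2,3) by (auto simp: mixed_bool)
  have nn: "0 \<le> x i * y j" for i j using x y by (cases i; cases j) auto
  have b1a: "- R \<le> A i j" for i j unfolding R_def
    by (cases i; cases j; smt (verit) abs_ge_zero abs_ge_minus_self abs_ge_self)
  have b1b: "A i j \<le> R" for i j unfolding R_def
    by (cases i; cases j; smt (verit) abs_ge_zero abs_ge_minus_self abs_ge_self)
  note b1 = b1a b1b
  have l: "x i * y j * (-R) \<le> x i * y j * A i j" for i j by (rule mult_left_mono[OF b1a nn])
  have u: "x i * y j * A i j \<le> x i * y j * R" for i j by (rule mult_left_mono[OF b1b nn])
  have s: "x True * y True + x True * y False + x False * y True + x False * y False = 1"
  proof -
    have "x True * y True + x True * y False + x False * y True + x False * y False
        = (x True + x False) * (y True + y False)" by (simp add: algebra_simps)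
    then show ?thesis using x y by simp
  qed
  have "x True * y True * (-R) + x True * y False * (-R) + x False * y True * (-R) + x False * y False * (-R) = -R"
    using s by (metis distrib_right mult_1)
  then show "- R \<le> payoff A x y" unfolding payoff_bool using l[of True True] l[of True False] l[of False True] l[of False False]
    by linarith
  have "x True * y True * R + x True * y False * R + x False * y True * R + x False * y False * R = R"
    using s by (metis distrib_right mult_1)
  then show "payoff A x y \<le> R" unfolding payoff_bool using u[of True True] u[of True False] u[of False True] u[of False False]
    by linarith
qed

lemma bdd_below_payoff: "bdd_below ((\<lambda>y. payoff (A::bool\<Rightarrow>bool\<Rightarrow>real) x y) ` mixed)" if "x \<in> mixed"
  using payoff_bounds(1)[OF that] by (intro bdd_belowI2) 

lemma val_ge:
  fixes B :: "bool\<Rightarrow>bool\<Rightarrow>real"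
  assumes "x0 \<in> mixed" "\<And>y. y \<in> mixed \<Longrightarrow> L \<le> payoff B x0 y"
  shows "L \<le> val B"
proof -
  obtain y1 :: "bool\<Rightarrow>real" where y1: "y1 \<in> mixed" using mixed_ne by blast
  have "L \<le> (INF y\<in>mixed. payoff B x0 y)"
    using assms(2) mixed_ne by (intro cINF_greatest) auto
  also have "\<dots> \<le> val B" unfolding val_def
  proof (rule cSUP_upper[OF assms(1)])
    show "bdd_above ((\<lambda>x. INF y\<in>mixed. payoff B x y) ` mixed)"
    proof (rule bdd_aboveI2)
      fix x :: "bool\<Rightarrow>real" assume x: "x \<in> mixed"
      have "(INF y\<in>mixed. payoff B x y) \<le> payoff B x y1"
        by (rule cINF_lower[OF bdd_below_payoff[OF x] y1])
      also have "\<dots> \<le> \<bar>B True True\<bar> + \<bar>B True False\<bar> + \<bar>B False True\<bar> + \<bar>B False False\<bar>"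
        by (rule payoff_bounds(2)[OF x y1])
      finally show "(INF y\<in>mixed. payoff B x y) \<le> \<bar>B True True\<bar> + \<bar>B True False\<bar> + \<bar>B False True\<bar> + \<bar>B False False\<bar>" .
    qed
  qed
  finally show ?thesis .
qed

lemma val_le:
  fixes B :: "bool\<Rightarrow>bool\<Rightarrow>real"
  assumes "y0 \<in> mixed" "\<And>x. x \<in> mixed \<Longrightarrow> payoff B x y0 \<le> U"
  shows "val B \<le> U"
  unfolding val_def
proof (rule cSUP_least[OF mixed_ne])
  fix x :: "bool\<Rightarrow>real" assume x: "x \<in> mixed"
  have "(INF y\<in>mixed. payoff B x y) \<le> payoff B x y0"
    by (rule cINF_lower[OF bdd_below_payoff[OF x] assms(1)])
  also have "\<dots> \<le> U" using assms(2)[OF x] .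
  finally show "(INF y\<in>mixed. payoff B x y) \<le> U" .
qed


lemma comb: "(a::real)/S*m + b/S*n = (a*m+b*n)/S"
  by (simp add: add_divide_distrib)

definition Mx :: "real \<Rightarrow> real \<Rightarrow> real \<Rightarrow> real \<Rightarrow> real \<Rightarrow> real \<Rightarrow> real \<Rightarrow> bool \<Rightarrow> bool \<Rightarrow> real" where
  "Mx lam u h c \<beta> z v = (\<lambda>i j. if i then (if j then lam*u + (1-lam)*(c + \<beta>*(v-z)) else lam*h + (1-lam)*u)
                          else (if j then u else h))"

lemma payoff_Mx_shift:
  "payoff (Mx lam u h c \<beta> z v) x y = payoff (Mx lam u h c \<beta> z z) x y + x True * y True * ((1-lam)*\<beta>*(v-z))"
  unfolding payoff_bool Mx_def by (simp add: algebra_simps)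

lemma core:
  fixes lam z u h c \<beta> :: real
  assumes lam: "0 < lam" "lam < 1" and bet: "0 < \<beta>" "\<beta> \<le> 1"
    and idt: "z*(c+h-2*u) = c*h - u^2"
    and cu: "(c-u)*(h-u) > 0"
    and Xp: "(lam*(u-h) + (1-lam)*(c-u))*(h-u) > 0"
  shows "(THE v. v = val (Mx lam u h c \<beta> z v)) = z"
proof -
  define X where "X = lam*(u-h) + (1-lam)*(c-u)"
  define S where "S = X + (h-u)"
  have S2: "S = (1-lam)*(c+h-2*u)" unfolding S_def X_def by (simp add: algebra_simps)
  have zS: "z*S = (1-lam)*(c*h-u^2)" unfolding S2 using idt by (metis mult.left_commute)
  have signs: "(0 < h-u \<and> 0 < X \<and> 0 < c-u \<and> 0 < S) \<or> (h-u < 0 \<and> X < 0 \<and> c-u < 0 \<and> S < 0)"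
  proof (cases "h - u > 0")
    case True
    then have "X > 0" "c - u > 0" using Xp cu unfolding X_def by (simp_all add: zero_less_mult_iff)
    then show ?thesis using True unfolding S_def by simp
  next
    case False
    then have hu: "h - u < 0" using cu by (cases "h-u = 0") auto
    then have "X < 0" "c - u < 0" using Xp cu unfolding X_def by (simp_all add: zero_less_mult_iff)
    then show ?thesis using hu unfolding S_def by simp
  qed
  have Snz: "S \<noteq> 0" using signs by auto
  define xs :: "bool \<Rightarrow> real" where "xs = (\<lambda>b. if b then (h-u)/S else X/S)"
  define ys :: "bool \<Rightarrow> real" where "ys = (\<lambda>b. if b then (1-lam)*(h-u)/S else (1-lam)*(c-u)/S)"
  have xs_m: "xs \<in> mixed"
  proof -
    have "0 \<le> (h-u)/S" "0 \<le> X/S" using signs by (auto simp: zero_le_divide_iff)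
    moreover have "(h-u)/S + X/S = 1"
    proof -
      have "(h-u)/S + X/S = (X + (h-u))/S" by (simp add: add_divide_distrib)
      then show ?thesis using Snz unfolding S_def by simp
    qed
    ultimately show ?thesis by (simp add: mixed_bool xs_def)
  qed
  have ys_m: "ys \<in> mixed"
  proof -
    have "0 \<le> (1-lam)*(h-u)/S" "0 \<le> (1-lam)*(c-u)/S" using signs lam
      by (auto simp: zero_le_divide_iff zero_le_mult_iff mult_le_0_iff)
    moreover have "(1-lam)*(h-u)/S + (1-lam)*(c-u)/S = 1"
    proof -
      have "(1-lam)*(h-u)/S + (1-lam)*(c-u)/S = ((1-lam)*(h-u) + (1-lam)*(c-u))/S"
        by (simp add: add_divide_distrib)
      also have "(1-lam)*(h-u) + (1-lam)*(c-u) = S" unfolding S2 by (simp add: algebra_simps)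
      finally show ?thesis using Snz by simp
    qed
    ultimately show ?thesis by (simp add: mixed_bool ys_def)
  qed
  let ?M = "Mx lam u h c \<beta> z z"
  have e1: "xs True * ?M True True + xs False * ?M False True = z"
  proof -
    have "xs True * ?M True True + xs False * ?M False True = (h-u)/S*(lam*u + (1-lam)*c) + X/S*(u)" unfolding xs_def ys_def Mx_def by simp
    also have "\<dots> = ((h-u)*(lam*u + (1-lam)*c) + X*(u))/S" by (rule comb)
    also have "(h-u)*(lam*u + (1-lam)*c) + X*(u) = z*S" unfolding zS X_def by (simp add: algebra_simps power2_eq_square)
    finally show ?thesis using Snz by simp
  qed
  have e2: "xs True * ?M True False + xs False * ?M False False = z"
  proof -
    have "xs True * ?M True False + xs False * ?M False False = (h-u)/S*(lam*h + (1-lam)*u) + X/S*(h)" unfolding xs_def ys_def Mx_def by simp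
    also have "\<dots> = ((h-u)*(lam*h + (1-lam)*u) + X*(h))/S" by (rule comb)
    also have "(h-u)*(lam*h + (1-lam)*u) + X*(h) = z*S" unfolding zS X_def by (simp add: algebra_simps power2_eq_square)
    finally show ?thesis using Snz by simp
  qed
  have f1: "ys True * ?M True True + ys False * ?M True False = z"
  proof -
    have "ys True * ?M True True + ys False * ?M True False = (1-lam)*(h-u)/S*(lam*u + (1-lam)*c) + (1-lam)*(c-u)/S*(lam*h + (1-lam)*u)" unfolding xs_def ys_def Mx_def by simp
    also have "\<dots> = ((1-lam)*(h-u)*(lam*u + (1-lam)*c) + (1-lam)*(c-u)*(lam*h + (1-lam)*u))/S" by (rule comb)
    also have "(1-lam)*(h-u)*(lam*u + (1-lam)*c) + (1-lam)*(c-u)*(lam*h + (1-lam)*u) = z*S" unfolding zS by (simp add: algebra_simps power2_eq_square)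
    finally show ?thesis using Snz by simp
  qed
  have f2: "ys True * ?M False True + ys False * ?M False False = z"
  proof -
    have "ys True * ?M False True + ys False * ?M False False = (1-lam)*(h-u)/S*(u) + (1-lam)*(c-u)/S*(h)" unfolding xs_def ys_def Mx_def by simp
    also have "\<dots> = ((1-lam)*(h-u)*(u) + (1-lam)*(c-u)*(h))/S" by (rule comb)
    also have "(1-lam)*(h-u)*(u) + (1-lam)*(c-u)*(h) = z*S" unfolding zS by (simp add: algebra_simps power2_eq_square)
    finally show ?thesis using Snz by simp
  qed
  have px: "payoff ?M xs y = z" if "y \<in> mixed" for y
  proof -
    have y: "y True + y False = 1" using that by (simp add: mixed_bool)
    have "payoff ?M xs y = y True * (xs True * ?M True True + xs False * ?M False True)
         + y False * (xs True * ?M True False + xs False * ?M False False)"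
      unfolding payoff_bool by (simp add: algebra_simps)
    also have "\<dots> = z" using e1 e2 y by (metis distrib_right mult.commute mult_1)
    finally show ?thesis .
  qed
  have py: "payoff ?M x ys = z" if "x \<in> mixed" for x
  proof -
    have x: "x True + x False = 1" using that by (simp add: mixed_bool)
    have "payoff ?M x ys = x True * (ys True * ?M True True + ys False * ?M True False)
         + x False * (ys True * ?M False True + ys False * ?M False False)"
      unfolding payoff_bool by (simp add: algebra_simps)
    also have "\<dots> = z" using f1 f2 x by (metis distrib_right mult.commute mult_1)
    finally show ?thesis .
  qed
  have vz: "val ?M = z"
    using val_ge[OF xs_m, of z ?M] val_le[OF ys_m, of ?M z] px py by fastforce
  show ?thesis
  proof (rule the_equality)
    show "z = val ?M" using vz by simp
  next
    fix v assume v: "v = val (Mx lam u h c \<beta> z v)"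
    show "v = z"
    proof (rule ccontr)
      assume "v \<noteq> z"
      then consider "v > z" | "v < z" by linarith
      then show False
      proof cases
        case 1
        have "val (Mx lam u h c \<beta> z v) \<le> z + (1-lam)*(v-z)"
        proof (rule val_le[OF ys_m])
          fix x :: "bool \<Rightarrow> real" assume x: "x \<in> mixed"
          have t: "0 \<le> x True * ys True * \<beta>" "x True * ys True * \<beta> \<le> 1"
            using x ys_m bet by (auto simp: mixed_bool intro!: mult_le_one mult_nonneg_nonneg)
          have K: "0 \<le> (1-lam)*(v-z)" using 1 lam by simp
          have "x True * ys True * ((1-lam)*\<beta>*(v-z)) = (x True * ys True * \<beta>) * ((1-lam)*(v-z))"
            by (simp add: algebra_simps)
          also have "\<dots> \<le> (1-lam)*(v-z)" using mult_left_le_one_le[OF K t] .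
          finally show "payoff (Mx lam u h c \<beta> z v) x ys \<le> z + (1-lam)*(v-z)"
            using payoff_Mx_shift[of lam u h c \<beta> z v x ys] py[OF x] by linarith
        qed
        then have "lam*(v-z) \<le> 0" using v by (simp add: algebra_simps)
        moreover have "lam*(v-z) > 0" using 1 lam by simp
        ultimately show False by linarith
      next
        case 2
        have "z + (1-lam)*(v-z) \<le> val (Mx lam u h c \<beta> z v)"
        proof (rule val_ge[OF xs_m])
          fix y :: "bool \<Rightarrow> real" assume y: "y \<in> mixed"
          have t: "0 \<le> xs True * y True * \<beta>" "xs True * y True * \<beta> \<le> 1"
            using y xs_m bet by (auto simp: mixed_bool intro!: mult_le_one mult_nonneg_nonneg)
          have K: "0 \<le> (1-lam)*(z-v)" using 2 lam by simp
          have "xs True * y True * ((1-lam)*\<beta>*(z-v)) = (xs True * y True * \<beta>) * ((1-lam)*(z-v))"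
            by (simp add: algebra_simps)
          also have "\<dots> \<le> (1-lam)*(z-v)" using mult_left_le_one_le[OF K t] .
          finally have "xs True * y True * ((1-lam)*\<beta>*(z-v)) \<le> (1-lam)*(z-v)" .
          moreover have "xs True * y True * ((1-lam)*\<beta>*(v-z)) = - (xs True * y True * ((1-lam)*\<beta>*(z-v)))"
            by (simp add: algebra_simps)
          ultimately show "z + (1-lam)*(v-z) \<le> payoff (Mx lam u h c \<beta> z v) xs y"
            using payoff_Mx_shift[of lam u h c \<beta> z v xs y] px[OF y] by (simp add: algebra_simps)
        qed
        then have "lam*(z-v) \<le> 0" using v by (simp add: algebra_simps)
        moreover have "lam*(z-v) > 0" using 2 lam by simp
        ultimately show False by linarith
      qed
    qed
  qed
qed


lemma deg2_extract:
  assumes "algebraic_deg2 z"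
  shows "\<exists>pr rr. pr \<in> \<rat> \<and> rr \<in> \<rat> \<and> z^2 + pr*z + rr = 0 \<and> z \<notin> \<rat>"
proof -
  obtain P :: "rat poly" where irr: "irreducible P" and deg: "degree P = 2"
    and root: "poly (map_poly of_rat P) z = 0"
    using assms unfolding algebraic_deg2_def by blast
  have Pnz: "P \<noteq> 0" using deg by auto
  have c2: "coeff P 2 \<noteq> 0" using Pnz deg leading_coeff_neq_0 by metis
  have dm: "degree (map_poly (of_rat :: rat \<Rightarrow> real) P) = 2"
    using deg by (simp add: degree_map_poly)
  have "poly (map_poly of_rat P) z = (\<Sum>i\<le>2. of_rat (coeff P i) * z^i)"
    unfolding poly_altdef dm by (simp add: coeff_map_poly)
  then have e: "of_rat (coeff P 0) + of_rat (coeff P 1) * z + of_rat (coeff P 2) * z^2 = 0"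
    using root by (simp add: eval_nat_numeral atMost_Suc)
  define pr where "pr = (of_rat (coeff P 1 / coeff P 2) :: real)"
  define rr where "rr = (of_rat (coeff P 0 / coeff P 2) :: real)"
  have c2r: "(of_rat (coeff P 2) :: real) \<noteq> 0" using c2 by simp
  have "z^2 + pr*z + rr = (of_rat (coeff P 0) + of_rat (coeff P 1) * z + of_rat (coeff P 2) * z^2) / of_rat (coeff P 2)"
    unfolding pr_def rr_def using c2r by (simp add: of_rat_divide field_simps)
  then have eq: "z^2 + pr*z + rr = 0" using e by simp
  have irrat: "z \<notin> \<rat>"
  proof
    assume "z \<in> \<rat>"
    then obtain y where zy: "z = of_rat y" by (auto elim: Rats_cases)
    have "of_rat (coeff P 0 + coeff P 1 * y + coeff P 2 * y^2) = (0::real)"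
      using e unfolding zy by (simp add: of_rat_add of_rat_mult of_rat_power)
    then have "coeff P 0 + coeff P 1 * y + coeff P 2 * y^2 = 0" by simp
    moreover have "poly P y = (\<Sum>i\<le>2. coeff P i * y^i)" unfolding poly_altdef deg ..
    ultimately have "poly P y = 0" by (simp add: eval_nat_numeral atMost_Suc)
    then have "[:-y, 1:] dvd P" by (simp add: poly_eq_0_iff_dvd)
    then obtain k where k: "P = [:-y, 1:] * k" by (auto elim: dvdE)
    have knz: "k \<noteq> 0" using Pnz k by auto
    have "degree P = 1 + degree k" unfolding k using knz by (subst degree_mult_eq) auto
    then have dk: "degree k = 1" using deg by simp
    from irreducibleD[OF irr k] show False
      using dk knz by (auto simp: is_unit_iff_degree)
  qed
  have "pr \<in> \<rat>" "rr \<in> \<rat>" unfolding pr_def rr_def by auto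
  then show ?thesis using eq irrat by blast
qed

theorem mainTheorem8:
  fixes z :: real
  assumes "algebraic_deg2 z"
  shows "\<exists>(g :: bool \<Rightarrow> bool \<Rightarrow> real) (q :: bool \<Rightarrow> bool \<Rightarrow> real) (w :: bool \<Rightarrow> bool \<Rightarrow> real).
           (\<forall>i j. g i j \<in> \<rat> \<and> q i j \<in> \<rat> \<and> w i j \<in> \<rat>) \<and>
           (\<forall>i j. 0 \<le> q i j \<and> q i j \<le> 1) \<and>
           ((\<lambda>lam. disc_value g q w lam) \<longlongrightarrow> z) (at_right 0)"
proof -
  obtain pr rr where prQ: "pr \<in> \<rat>" and rrQ: "rr \<in> \<rat>" and eq: "z^2 + pr*z + rr = 0"
    and irrat: "z \<notin> \<rat>"
    using deg2_extract[OF assms] by blast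
  have mQ: "-pr/2 \<in> \<rat>" using prQ by simp
  have zm: "z \<noteq> -pr/2" using mQ irrat by auto
  obtain u h where uQ: "u \<in> \<rat>" and hQ: "h \<in> \<rat>" and zuh: "(z-u)*(h-z) > 0"
    and ineq: "(h-u)^2 < h^2 + pr*h + rr"
  proof (cases "z > -pr/2")
    case True
    obtain u where uQ: "u \<in> \<rat>" and u1: "-pr/2 < u" and u2: "u < z"
      using Rats_dense_in_real[OF True] by blast
    define d where "d = pr + 2*u"
    have d: "d > 0" using u1 unfolding d_def by linarith
    define T where "T = max z ((u^2 - rr)/d)"
    obtain h where hQ: "h \<in> \<rat>" and h1: "T < h" and h2: "h < T + 1"
      using Rats_dense_in_real[of T "T+1"] by auto
    have hz: "h > z" using h1 unfolding T_def by simp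
    have "(u^2 - rr)/d < h" using h1 unfolding T_def by simp
    then have k: "u^2 - rr < h*d" using d by (simp add: pos_divide_less_eq)
    have "(h-u)^2 = h^2 - 2*u*h + u^2" by (simp add: power2_eq_square algebra_simps)
    moreover have "h*d = h*pr + 2*u*h" unfolding d_def by (simp add: algebra_simps)
    ultimately have "(h-u)^2 < h^2 + pr*h + rr" using k by (simp add: algebra_simps)
    moreover have "(z-u)*(h-z) > 0" using hz u2 by simp
    ultimately show ?thesis using that uQ hQ by blast
  next
    case False
    then have F: "z < -pr/2" using zm by linarith
    obtain u where uQ: "u \<in> \<rat>" and u1: "z < u" and u2: "u < -pr/2"
      using Rats_dense_in_real[OF F] by blast
    define d where "d = pr + 2*u"
    have d: "d < 0" using u2 unfolding d_def by linarith
    define T where "T = min z ((u^2 - rr)/d)"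
    obtain h where hQ: "h \<in> \<rat>" and h1: "T - 1 < h" and h2: "h < T"
      using Rats_dense_in_real[of "T - 1" T] by auto
    have hz: "h < z" using h2 unfolding T_def by simp
    have "h < (u^2 - rr)/d" using h2 unfolding T_def by simp
    then have k: "u^2 - rr < h*d" using d by (simp add: neg_less_divide_eq)
    have "(h-u)^2 = h^2 - 2*u*h + u^2" by (simp add: power2_eq_square algebra_simps)
    moreover have "h*d = h*pr + 2*u*h" unfolding d_def by (simp add: algebra_simps)
    ultimately have "(h-u)^2 < h^2 + pr*h + rr" using k by (simp add: algebra_simps)
    moreover have "(z-u)*(h-z) > 0" using hz u1 by (simp add: mult_neg_neg)
    ultimately show ?thesis using that uQ hQ by blast
  qed
  define Ph where "Ph = h^2 + pr*h + rr"
  have hu: "h \<noteq> u"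
  proof
    assume "h = u"
    then have "(z-u)*(h-z) = -((z-u)*(z-u))" by (simp add: algebra_simps)
    then show False using zuh by (smt (verit) zero_le_square)
  qed
  have hu2: "(h-u)^2 > 0" using hu by simp
  have Php: "Ph > 0" using ineq hu2 unfolding Ph_def by linarith
  define \<beta> where "\<beta> = (h-u)^2 / Ph"
  have b0: "\<beta> > 0" unfolding \<beta>_def using hu2 Php by simp
  have b1: "\<beta> < 1" unfolding \<beta>_def using ineq Php unfolding Ph_def by simp
  have bPh: "\<beta> * Ph = (h-u)^2" unfolding \<beta>_def using Php by simp
  define a where "a = \<beta>*pr + 2*u - (1-\<beta>)*h"
  define c where "c = a + \<beta>*z"
  have "z*(c+h-2*u) - (c*h - u^2) = \<beta>*(z^2 + pr*z + rr) + ((h-u)^2 - \<beta>*Ph)"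
    unfolding c_def a_def Ph_def by (simp add: algebra_simps power2_eq_square)
  then have idt: "z*(c+h-2*u) = c*h - u^2" using eq bPh by simp
  have "(c-u)*(h-z) - (z-u)*(h-u) = (c*h - u^2) - z*(c+h-2*u)"
    by (simp add: algebra_simps power2_eq_square)
  then have cz: "(c-u)*(h-z) = (z-u)*(h-u)" using idt by simp
  have "((c-u)*(h-u)) * (h-z)^2 = ((z-u)*(h-z)) * (h-u)^2"
  proof -
    have "((c-u)*(h-u)) * (h-z)^2 = ((c-u)*(h-z)) * ((h-u)*(h-z))" by (simp add: power2_eq_square algebra_simps)
    also have "\<dots> = ((z-u)*(h-u)) * ((h-u)*(h-z))" using cz by simp
    finally show ?thesis by (simp add: power2_eq_square algebra_simps)
  qed
  moreover have "((z-u)*(h-z)) * (h-u)^2 > 0" using zuh hu2 by simp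
  moreover have "(h-z)^2 > 0" using zuh by (metis mult_zero_right power2_less_0 right_minus_eq zero_less_power2 less_irrefl)
  ultimately have cu: "(c-u)*(h-u) > 0" by (metis zero_less_mult_pos2)
  define g :: "bool \<Rightarrow> bool \<Rightarrow> real" where "g = (\<lambda>i j. if j then u else h)"
  define q :: "bool \<Rightarrow> bool \<Rightarrow> real" where "q = (\<lambda>i j. if i \<and> j then 1 - \<beta> else 1)"
  define w :: "bool \<Rightarrow> bool \<Rightarrow> real" where
    "w = (\<lambda>i j. if i then (if j then a/(1-\<beta>) else u) else (if j then u else h))"
  have bQ: "\<beta> \<in> \<rat>" unfolding \<beta>_def Ph_def using uQ hQ prQ rrQ by simp
  have aQ: "a \<in> \<rat>" unfolding a_def using bQ uQ hQ prQ by simp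
  have rat: "\<forall>i j. g i j \<in> \<rat> \<and> q i j \<in> \<rat> \<and> w i j \<in> \<rat>"
    unfolding g_def q_def w_def using uQ hQ bQ aQ by simp
  have qr: "\<forall>i j. 0 \<le> q i j \<and> q i j \<le> 1" unfolding q_def using b0 b1 by simp
  have sh: "shapley_op g q w lam v = val (Mx lam u h c \<beta> z v)" for lam v
  proof -
    have "(\<lambda>i j. lam * g i j + (1 - lam) * (q i j * w i j + (1 - q i j) * v)) = Mx lam u h c \<beta> z v"
      unfolding g_def q_def w_def Mx_def c_def
    proof (intro ext)
      fix i j :: bool
      have bne: "\<beta> \<noteq> 1" using b1 by simp
      have w11: "(1-\<beta>)*(a/(1-\<beta>)) = a" using b1 by simp
      show "lam * (if j then u else h) + (1 - lam) * ((if i \<and> j then 1 - \<beta> else 1) *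
        (if i then if j then a / (1 - \<beta>) else u else if j then u else h) +
        (1 - (if i \<and> j then 1 - \<beta> else 1)) * v) =
        (if i then if j then lam * u + (1 - lam) * (a + \<beta> * z + \<beta> * (v - z)) else lam * h + (1 - lam) * u
         else if j then u else h)"
        by (cases i; cases j; simp add: w11 bne; simp add: algebra_simps)
    qed
    then show ?thesis unfolding shapley_op_def by simp
  qed
  have L: "((\<lambda>lam. (lam*(u-h) + (1-lam)*(c-u))*(h-u)) \<longlongrightarrow> (0*(u-h) + (1-0)*(c-u))*(h-u)) (at_right 0)"
    by (intro tendsto_intros)
  have E1: "\<forall>\<^sub>F lam in at_right 0. (lam*(u-h) + (1-lam)*(c-u))*(h-u) > 0"
    using order_tendstoD(1)[OF L] cu by simp
  have E2: "\<forall>\<^sub>F lam in at_right (0::real). lam < 1"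
    using order_tendstoD(2)[OF tendsto_ident_at[of "0::real" "{0<..}"]] by simp
  have E3: "\<forall>\<^sub>F lam in at_right (0::real). 0 < lam" by (rule eventually_at_right_less)
  have "\<forall>\<^sub>F lam in at_right 0. disc_value g q w lam = z"
    using E1 E2 E3
  proof eventually_elim
    case (elim lam)
    have "disc_value g q w lam = (THE v. v = val (Mx lam u h c \<beta> z v))"
      unfolding disc_value_def sh ..
    also have "\<dots> = z" using core[of lam \<beta> z c h u] elim b0 b1 idt cu by simp
    finally show ?case .
  qed
  then have "((\<lambda>lam. disc_value g q w lam) \<longlongrightarrow> z) (at_right 0)" by (rule tendsto_eventually)
  then show ?thesis using rat qr by blast
qed

end
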